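(* Let $q$ be a prime power not divisible by $2$ or $3$, and let $\lambda\in\mathbb{F}_q^\times$ with $27\lambda\ne1$. Let $E_\lambda$ be the projective closure of the curve $y^2+xy+y=\lambda x^3$ (the affine curve together with its point at infinity). Then $|E_\lambda(\mathbb{F}_q)|=q+1-H_q(27\lambda)$, where $H_q$ is the hypergeometric sum with $\boldsymbol\alpha=(1/3,2/3)$, $\boldsymbol\beta=(1,1)$.
   Context: Fix a nontrivial additive character $\psi_q$ of $\mathbb{F}_q$, a generator $\omega$ of the character group of $\mathbb{F}_q^\times$, and $g(m)=\sum_{x\in\mathbb{F}_q^\times}\omega(x)^m\psi_q(x)$. Here, with $(p_1)=(3)$ and $(q_1,q_2,q_3)=(1,1,1)$, $H_q$ is defined for $t\in\mathbb{F}_q^\times$ by $$H_q(t)=\frac{(-1)^{4}}{1-q}\sum_{m=0}^{q-2}q^{s(m)-1}g(3m)g(-m)^3\,\omega(-t/27)^m,$$ where $s(m)=1$ if $m\equiv0\pmod{q-1}$ and $s(m)=0$ otherwise. *)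

theory Defs
  imports Complex_Main
begin

text \<open>The finite field F_q is modelled by a finite field type 'a, with q = card (UNIV :: 'a set).\<close>

definition additive_char :: "('a::{finite,field} \<Rightarrow> complex) \<Rightarrow> bool" where
  "additive_char \<psi> \<longleftrightarrow> (\<forall>x y. \<psi> (x + y) = \<psi> x * \<psi> y) \<and> \<psi> 0 = 1"

definition nontrivial_additive_char :: "('a::{finite,field} \<Rightarrow> complex) \<Rightarrow> bool" where
  "nontrivial_additive_char \<psi> \<longleftrightarrow> additive_char \<psi> \<and> (\<exists>x. \<psi> x \<noteq> 1)"

definition mult_char :: "('a::{finite,field} \<Rightarrow> complex) \<Rightarrow> bool" where
  "mult_char \<omega> \<longleftrightarrow> (\<forall>x y. x \<noteq> 0 \<longrightarrow> y \<noteq> 0 \<longrightarrow> \<omega> (x * y) = \<omega> x * \<omega> y)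
                   \<and> (\<forall>x. x \<noteq> 0 \<longrightarrow> \<omega> x \<noteq> 0)"

text \<open>A generator of the (cyclic) character group of F_q^x: its order is exactly q - 1.\<close>
definition char_generator :: "('a::{finite,field} \<Rightarrow> complex) \<Rightarrow> bool" where
  "char_generator \<omega> \<longleftrightarrow> mult_char \<omega> \<and>
     (\<forall>k::nat. (\<forall>x::'a. x \<noteq> 0 \<longrightarrow> \<omega> x ^ k = 1) \<longleftrightarrow> (card (UNIV :: 'a set) - 1) dvd k)"

definition gauss_sum :: "('a::{finite,field} \<Rightarrow> complex) \<Rightarrow> ('a \<Rightarrow> complex) \<Rightarrow> int \<Rightarrow> complex" where
  "gauss_sum \<psi> \<omega> m = (\<Sum>x\<in>{x::'a. x \<noteq> 0}. (\<omega> x) powi m * \<psi> x)"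

definition s_fun :: "nat \<Rightarrow> int \<Rightarrow> int" where
  "s_fun q m = (if m mod (int q - 1) = 0 then 1 else 0)"

text \<open>H_q(t) for alpha = (1/3,2/3), beta = (1,1), i.e. (p_1) = (3), (q_1,q_2,q_3) = (1,1,1).\<close>
definition H_q :: "('a::{finite,field} \<Rightarrow> complex) \<Rightarrow> ('a \<Rightarrow> complex) \<Rightarrow> 'a \<Rightarrow> complex" where
  "H_q \<psi> \<omega> t =
     (let q = card (UNIV :: 'a set) in
      ((-1) ^ 4 / (1 - of_nat q)) *
      (\<Sum>m = 0..int q - 2.
         (of_nat q) powi (s_fun q m - 1) * gauss_sum \<psi> \<omega> (3 * m) * (gauss_sum \<psi> \<omega> (- m)) ^ 3
         * (\<omega> (- t / 27)) powi m))"

text \<open>Number of F_q-points of the projective closure of y^2 + xy + y = lambda x^3: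
  the affine solutions plus the single point at infinity.\<close>
definition E_card :: "'a::{finite,field} \<Rightarrow> nat" where
  "E_card lam = card {p :: 'a \<times> 'a. snd p ^ 2 + fst p * snd p + snd p = lam * fst p ^ 3} + 1"

end

theory Submission imports Defs "HOL-Number_Theory.Residues" begin

lemma sum_UNIV_split:
  fixes f :: "'a::{finite,zero} \<Rightarrow> complex"
  shows "(\<Sum>x\<in>UNIV. f x) = f 0 + (\<Sum>x\<in>{x. x \<noteq> 0}. f x)"
proof -
  have "(\<Sum>x\<in>UNIV. f x) = (\<Sum>x\<in>insert 0 {x::'a. x \<noteq> 0}. f x)" by (rule sum.cong) auto
  also have "\<dots> = f 0 + (\<Sum>x\<in>{x. x \<noteq> 0}. f x)" by (rule sum.insert) auto
  finally show ?thesis .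
qed

lemma card_nonzero:
  "card {x::'a::{finite,zero}. x \<noteq> 0} = card (UNIV::'a set) - 1"
proof -
  have "{x::'a. x \<noteq> 0} = UNIV - {0}" by auto
  then show ?thesis by (simp add: card_Diff_singleton)
qed

lemma psi_add: "additive_char \<psi> \<Longrightarrow> \<psi> (x + y) = \<psi> x * \<psi> y"
  unfolding additive_char_def by blast

lemma psi_sum_UNIV:
  fixes \<psi> :: "'a::{finite,field} \<Rightarrow> complex"
  assumes "nontrivial_additive_char \<psi>"
  shows "(\<Sum>x\<in>UNIV. \<psi> x) = 0"
proof -
  from assms obtain x0 where x0: "\<psi> x0 \<noteq> 1" and add: "additive_char \<psi>"
    unfolding nontrivial_additive_char_def by blast
  have "(\<Sum>x\<in>UNIV. \<psi> x) = (\<Sum>x\<in>UNIV. \<psi> (x + x0))"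
    by (rule sum.reindex_bij_witness[where i="\<lambda>x. x + x0" and j="\<lambda>x. x - x0"]) auto
  also have "\<dots> = \<psi> x0 * (\<Sum>x\<in>UNIV. \<psi> x)"
    by (simp add: psi_add[OF add] sum_distrib_left mult.commute)
  finally have "(1 - \<psi> x0) * (\<Sum>x\<in>UNIV. \<psi> x) = 0" by (simp add: algebra_simps)
  then show ?thesis using x0 by simp
qed

lemma psi_sum_scaled:
  fixes \<psi> :: "'a::{finite,field} \<Rightarrow> complex"
  assumes "nontrivial_additive_char \<psi>" "z \<noteq> 0"
  shows "(\<Sum>x\<in>UNIV. \<psi> (x * z)) = 0"
proof -
  have "(\<Sum>x\<in>UNIV. \<psi> (x * z)) = (\<Sum>x\<in>UNIV. \<psi> x)"
    by (rule sum.reindex_bij_witness[where i="\<lambda>x. x / z" and j="\<lambda>x. x * z"]) (use assms(2) in auto)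
  then show ?thesis using psi_sum_UNIV[OF assms(1)] by simp
qed

lemma psi_sum_star:
  fixes \<psi> :: "'a::{finite,field} \<Rightarrow> complex"
  assumes "nontrivial_additive_char \<psi>"
  shows "(\<Sum>x\<in>{x. x \<noteq> 0}. \<psi> (x * z)) = (if z = 0 then of_nat (card (UNIV::'a set)) - 1 else -1)"
proof -
  have p0: "\<psi> 0 = 1" using assms unfolding nontrivial_additive_char_def additive_char_def by blast
  have cpos: "card (UNIV::'a set) \<ge> 1"
    by (metis One_nat_def Suc_leI card_gt_0_iff empty_not_UNIV finite)
  show ?thesis
  proof (cases "z = 0")
    case True
    then show ?thesis using p0 cpos by (simp add: card_nonzero of_nat_diff)
  next
    case False
    have "0 = (\<Sum>x\<in>UNIV. \<psi> (x * z))" using psi_sum_scaled[OF assms False] by simp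
    also have "\<dots> = 1 + (\<Sum>x\<in>{x. x \<noteq> 0}. \<psi> (x * z))" by (subst sum_UNIV_split) (simp add: p0)
    finally show ?thesis using False by (simp add: eq_neg_iff_add_eq_0 add.commute)
  qed
qed

lemma fin_mult_subgroup_pow_card:
  fixes I :: "complex set"
  assumes "finite I" "0 \<notin> I" "\<And>u v. u\<in>I \<Longrightarrow> v\<in>I \<Longrightarrow> u*v \<in> I" "w \<in> I"
  shows "w ^ card I = 1"
proof -
  have inj: "inj_on (\<lambda>u. w*u) I" using assms(2,4) by (auto simp: inj_on_def)
  have sub: "(\<lambda>u. w*u) ` I \<subseteq> I" using assms(3,4) by auto
  have eq: "(\<lambda>u. w*u) ` I = I" using card_subset_eq[OF assms(1) sub] card_image[OF inj] by simp
  have "prod (\<lambda>u. u) I = prod (\<lambda>u. u) ((\<lambda>u. w*u) ` I)" using eq by simp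
  also have "\<dots> = prod (\<lambda>u. w*u) I" using prod.reindex[OF inj, of "\<lambda>u. u"] by simp
  also have "\<dots> = w ^ card I * prod (\<lambda>u. u) I" by (simp add: prod.distrib)
  finally have "prod (\<lambda>u. u) I * (w^card I - 1) = 0" by (simp add: algebra_simps)
  moreover have "prod (\<lambda>u. u) I \<noteq> 0" using assms(1,2) by auto
  ultimately show ?thesis by simp
qed

context
  fixes \<omega> :: "'a::{finite,field} \<Rightarrow> complex"
  assumes gen: "char_generator \<omega>"
begin

lemma om_mult: "x \<noteq> 0 \<Longrightarrow> y \<noteq> 0 \<Longrightarrow> \<omega> (x * y) = \<omega> x * \<omega> y"
  using gen unfolding char_generator_def mult_char_def by blast

lemma om_nz: "x \<noteq> 0 \<Longrightarrow> \<omega> x \<noteq> 0"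
  using gen unfolding char_generator_def mult_char_def by blast

lemma om_one: "\<omega> 1 = 1"
  using om_mult[of 1 1] om_nz[of 1] by simp

lemma om_gen_iff: "(\<forall>x::'a. x \<noteq> 0 \<longrightarrow> \<omega> x ^ k = 1) \<longleftrightarrow> (card (UNIV::'a set) - 1) dvd k"
  using gen[unfolded char_generator_def, THEN conjunct2, THEN spec, of k] .

lemma om_pow: "x \<noteq> 0 \<Longrightarrow> \<omega> x ^ (card (UNIV::'a set) - 1) = 1"
  using om_gen_iff[of "card (UNIV::'a set) - 1"] by simp

lemma om_inj: assumes "x \<noteq> 0" "\<omega> x = 1" shows "x = 1"
proof -
  define F where "F = {x::'a. x \<noteq> 0}"
  define I where "I = \<omega> ` F"
  have fI: "finite I" unfolding I_def by simp
  have I0: "0 \<notin> I" unfolding I_def F_def using om_nz by auto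
  have Im: "u*v \<in> I" if "u \<in> I" "v \<in> I" for u v
  proof -
    from that obtain a b where "a \<in> F" "b \<in> F" "u = \<omega> a" "v = \<omega> b" unfolding I_def by auto
    then show ?thesis unfolding I_def F_def using om_mult[of a b]
      by (auto intro!: image_eqI[of _ _ "a*b"])
  qed
  have "\<forall>y::'a. y \<noteq> 0 \<longrightarrow> \<omega> y ^ card I = 1"
    using fin_mult_subgroup_pow_card[OF fI I0 Im] unfolding I_def F_def by auto
  then have dv: "(card (UNIV::'a set) - 1) dvd card I"
    using om_gen_iff by blast
  have le: "card I \<le> card F" unfolding I_def by (rule card_image_le) simp
  have "1 \<in> F" unfolding F_def by simp
  then have "I \<noteq> {}" unfolding I_def by auto
  then have "card I > 0" using fI by auto
  then have "card I = card F" using dv le card_nonzero[where 'a='a] unfolding F_def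
    by (metis dvd_imp_le le_antisym)
  then have "inj_on \<omega> F" unfolding I_def by (intro eq_card_imp_inj_on) simp_all
  moreover have "x \<in> F" "(1::'a) \<in> F" using assms unfolding F_def by auto
  ultimately show ?thesis using assms(2) om_one by (metis inj_onD)
qed

lemma om_orth:
  assumes "z \<noteq> 0"
  shows "(\<Sum>m<card (UNIV::'a set) - 1. \<omega> z ^ m) = (if z = 1 then of_nat (card (UNIV::'a set) - 1) else 0)"
proof (cases "z = 1")
  case True then show ?thesis by (simp add: om_one)
next
  case False
  then have "\<omega> z \<noteq> 1" using om_inj assms by blast
  then show ?thesis using geometric_sum[of "\<omega> z"] om_pow[OF assms] False by simp
qed

end

lemma cube_sum:
  fixes f :: "'b \<Rightarrow> complex"
  shows "k * (\<Sum>x\<in>A. f x)^3 = (\<Sum>x\<in>A. \<Sum>y\<in>A. \<Sum>z\<in>A. k * (f x * f y * f z))"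
  by (simp add: power3_eq_cube sum_distrib_left sum_distrib_right algebra_simps)

context
  fixes \<omega> \<psi> :: "'a::{finite,field} \<Rightarrow> complex" and lam :: 'a
  assumes gen: "char_generator \<omega>" and ntr: "nontrivial_additive_char \<psi>" and lam0: "lam \<noteq> 0"
begin

lemma addc: "additive_char \<psi>" using ntr unfolding nontrivial_additive_char_def by blast

lemma gpos: "gauss_sum \<psi> \<omega> (3 * int m) = (\<Sum>a\<in>{x. x \<noteq> 0}. \<omega> a ^ (3*m) * \<psi> a)"
proof -
  have "3 * int m = int (3*m)" by simp
  then show ?thesis unfolding gauss_sum_def by (simp only: power_int_of_nat)
qed

lemma gneg: "gauss_sum \<psi> \<omega> (- int m) = (\<Sum>a\<in>{x. x \<noteq> 0}. inverse (\<omega> a) ^ m * \<psi> a)"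
  unfolding gauss_sum_def by (simp add: power_int_minus power_int_of_nat power_inverse)

lemma Sa:
  assumes "a \<noteq> 0"
  shows "(\<Sum>b\<in>{x. x \<noteq> 0}. inverse (\<omega> b) ^ m * \<psi> b) =
         inverse (\<omega> a) ^ m * (\<Sum>b\<in>{x. x \<noteq> 0}. inverse (\<omega> b) ^ m * \<psi> (a * b))"
proof -
  have "inverse (\<omega> a) ^ m * (\<Sum>b\<in>{x. x \<noteq> 0}. inverse (\<omega> b) ^ m * \<psi> (a * b))
      = (\<Sum>b\<in>{x. x \<noteq> 0}. inverse (\<omega> (a*b)) ^ m * \<psi> (a * b))"
    by (auto simp: sum_distrib_left om_mult[OF gen] assms power_mult_distrib intro!: sum.cong)
  also have "\<dots> = (\<Sum>b\<in>{x. x \<noteq> 0}. inverse (\<omega> b) ^ m * \<psi> b)"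
    by (rule sum.reindex_bij_witness[where i="\<lambda>x. x / a" and j="\<lambda>x. a * x"]) (use assms in auto)
  finally show ?thesis by simp
qed

lemma key:
  assumes "a \<noteq> 0" "b \<noteq> 0" "c \<noteq> 0" "d \<noteq> 0"
  shows "\<psi> a * \<omega> (-lam) ^ m * ((inverse (\<omega> b) ^ m * \<psi> (a*b)) * (inverse (\<omega> c) ^ m * \<psi> (a*c))
            * (inverse (\<omega> d) ^ m * \<psi> (a*d)))
       = \<omega> (-lam/(b*c*d)) ^ m * \<psi> (a*(1+b+c+d))"
proof -
  have p: "\<psi> (a*(1+b+c+d)) = \<psi> a * \<psi> (a*b) * \<psi> (a*c) * \<psi> (a*d)"
    by (simp add: distrib_left psi_add[OF addc])
  have "\<omega> (-lam) = \<omega> ((-lam/(b*c*d)) * (b*(c*d)))" using assms by (simp add: field_simps)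
  also have "\<dots> = \<omega> (-lam/(b*c*d)) * \<omega> (b*(c*d))"
    by (rule om_mult[OF gen]) (use assms lam0 in auto)
  also have "\<omega> (b*(c*d)) = \<omega> b * (\<omega> c * \<omega> d)" using assms by (simp add: om_mult[OF gen])
  finally have "\<omega> (-lam) = \<omega> (-lam/(b*c*d)) * \<omega> b * \<omega> c * \<omega> d" by (simp add: mult.assoc)
  then have o: "\<omega> (-lam/(b*c*d)) = \<omega> (-lam) * inverse (\<omega> b) * inverse (\<omega> c) * inverse (\<omega> d)"
    using assms om_nz[OF gen] by (simp add: field_simps)
  show ?thesis unfolding p o by (simp add: power_mult_distrib algebra_simps)
qed

lemma Xm:
  "gauss_sum \<psi> \<omega> (3 * int m) * gauss_sum \<psi> \<omega> (- int m) ^ 3 * \<omega> (-lam) ^ m =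
   (\<Sum>a\<in>{x. x \<noteq> 0}. \<Sum>b\<in>{x. x \<noteq> 0}. \<Sum>c\<in>{x. x \<noteq> 0}. \<Sum>d\<in>{x. x \<noteq> 0}.
      \<omega> (-lam/(b*c*d)) ^ m * \<psi> (a*(1+b+c+d)))"
proof -
  define S where "S a = (\<Sum>b\<in>{x. x \<noteq> 0}. inverse (\<omega> b) ^ m * \<psi> (a * b))" for a
  have "gauss_sum \<psi> \<omega> (3 * int m) * gauss_sum \<psi> \<omega> (- int m) ^ 3 * \<omega> (-lam) ^ m
     = (\<Sum>a\<in>{x. x \<noteq> 0}. \<omega> a ^ (3*m) * \<psi> a * gauss_sum \<psi> \<omega> (- int m) ^ 3 * \<omega> (-lam) ^ m)"
    unfolding gpos by (simp add: sum_distrib_right)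
  also have "\<dots> = (\<Sum>a\<in>{x. x \<noteq> 0}. (\<psi> a * \<omega> (-lam) ^ m) * S a ^ 3)"
  proof (rule sum.cong[OF refl])
    fix a :: 'a assume "a \<in> {x. x \<noteq> 0}"
    then have a: "a \<noteq> 0" by simp
    have e: "\<omega> a ^ (3*m) * (inverse (\<omega> a) ^ m) ^ 3 = 1"
      using om_nz[OF gen a] by (simp add: power_mult[symmetric] power_inverse mult.commute)
    show "\<omega> a ^ (3*m) * \<psi> a * gauss_sum \<psi> \<omega> (- int m) ^ 3 * \<omega> (-lam) ^ m = (\<psi> a * \<omega> (-lam) ^ m) * S a ^ 3"
    proof -
      have "\<omega> a ^ (3*m) * \<psi> a * gauss_sum \<psi> \<omega> (- int m) ^ 3 * \<omega> (-lam) ^ m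
          = (\<omega> a ^ (3*m) * (inverse (\<omega> a) ^ m) ^ 3) * ((\<psi> a * \<omega> (-lam) ^ m) * S a ^ 3)"
        unfolding gneg Sa[OF a] S_def[symmetric] power_mult_distrib by (simp only: mult_ac)
      then show ?thesis using e by simp
    qed
  qed
  also have "\<dots> = (\<Sum>a\<in>{x. x \<noteq> 0}. \<Sum>b\<in>{x. x \<noteq> 0}. \<Sum>c\<in>{x. x \<noteq> 0}. \<Sum>d\<in>{x. x \<noteq> 0}.
      \<omega> (-lam/(b*c*d)) ^ m * \<psi> (a*(1+b+c+d)))"
    unfolding S_def cube_sum by (intro sum.cong refl) (simp add: key)
  finally show ?thesis .
qed

end

lemma swap5:
  "(\<Sum>m\<in>M. \<Sum>a\<in>A. \<Sum>b\<in>B. \<Sum>c\<in>C. \<Sum>d\<in>D. f m a b c d) =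
   (\<Sum>a\<in>A. \<Sum>b\<in>B. \<Sum>c\<in>C. \<Sum>d\<in>D. \<Sum>m\<in>M. f m a b c d)"
proof -
  have "(\<Sum>m\<in>M. \<Sum>a\<in>A. \<Sum>b\<in>B. \<Sum>c\<in>C. \<Sum>d\<in>D. f m a b c d) =
        (\<Sum>a\<in>A. \<Sum>m\<in>M. \<Sum>b\<in>B. \<Sum>c\<in>C. \<Sum>d\<in>D. f m a b c d)" by (rule sum.swap)
  also have "\<dots> = (\<Sum>a\<in>A. \<Sum>b\<in>B. \<Sum>m\<in>M. \<Sum>c\<in>C. \<Sum>d\<in>D. f m a b c d)"
    by (rule sum.cong[OF refl], rule sum.swap)
  also have "\<dots> = (\<Sum>a\<in>A. \<Sum>b\<in>B. \<Sum>c\<in>C. \<Sum>m\<in>M. \<Sum>d\<in>D. f m a b c d)"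
    by (rule sum.cong[OF refl], rule sum.cong[OF refl], rule sum.swap)
  also have "\<dots> = (\<Sum>a\<in>A. \<Sum>b\<in>B. \<Sum>c\<in>C. \<Sum>d\<in>D. \<Sum>m\<in>M. f m a b c d)"
    by (rule sum.cong[OF refl], rule sum.cong[OF refl], rule sum.cong[OF refl], rule sum.swap)
  finally show ?thesis .
qed

lemma swap3:
  "(\<Sum>a\<in>A. \<Sum>b\<in>B. \<Sum>c\<in>C. f a b c) = (\<Sum>b\<in>B. \<Sum>c\<in>C. \<Sum>a\<in>A. f a b c)"
proof -
  have "(\<Sum>a\<in>A. \<Sum>b\<in>B. \<Sum>c\<in>C. f a b c) = (\<Sum>b\<in>B. \<Sum>a\<in>A. \<Sum>c\<in>C. f a b c)" by (rule sum.swap)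
  also have "\<dots> = (\<Sum>b\<in>B. \<Sum>c\<in>C. \<Sum>a\<in>A. f a b c)" by (rule sum.cong[OF refl], rule sum.swap)
  finally show ?thesis .
qed

lemma card_filter_sum:
  "finite A \<Longrightarrow> (of_nat (card {p\<in>A. P p}) :: complex) = (\<Sum>p\<in>A. if P p then 1 else 0)"
  by (simp add: sum.inter_filter[symmetric])

context
  fixes \<omega> \<psi> :: "'a::{finite,field} \<Rightarrow> complex" and lam :: 'a
  assumes gen: "char_generator \<omega>" and ntr: "nontrivial_additive_char \<psi>" and lam0: "lam \<noteq> 0"
begin

lemma sumX:
  "(\<Sum>m<card (UNIV::'a set) - 1. gauss_sum \<psi> \<omega> (3 * int m) * gauss_sum \<psi> \<omega> (- int m) ^ 3 * \<omega> (-lam) ^ m)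
   = of_nat (card (UNIV::'a set) - 1) * (of_nat (card (UNIV::'a set)) * of_nat (card {p \<in> {x::'a. x \<noteq> 0} \<times> {x. x \<noteq> 0}.
        1 + fst p + snd p + - lam / (fst p * snd p) = 0}) - of_nat (card (UNIV::'a set) - 1) ^ 2)"
proof -
  define F where "F = {x::'a. x \<noteq> 0}"
  define n where "n = card (UNIV::'a set) - 1"
  define e where "e b c = 1 + b + c + - lam / (b * c)" for b c :: 'a
  have Fn: "card F = n" unfolding F_def n_def by (rule card_nonzero)
  have "(\<Sum>m<n. gauss_sum \<psi> \<omega> (3 * int m) * gauss_sum \<psi> \<omega> (- int m) ^ 3 * \<omega> (-lam) ^ m)
      = (\<Sum>m<n. \<Sum>a\<in>F. \<Sum>b\<in>F. \<Sum>c\<in>F. \<Sum>d\<in>F. \<omega> (-lam/(b*c*d)) ^ m * \<psi> (a*(1+b+c+d)))"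
    unfolding F_def by (simp only: Xm[OF gen ntr lam0])
  also have "\<dots> = (\<Sum>a\<in>F. \<Sum>b\<in>F. \<Sum>c\<in>F. \<Sum>d\<in>F. (\<Sum>m<n. \<omega> (-lam/(b*c*d)) ^ m) * \<psi> (a*(1+b+c+d)))"
    by (subst swap5, intro sum.cong refl, simp only: sum_distrib_right)
  also have "\<dots> = (\<Sum>a\<in>F. \<Sum>b\<in>F. \<Sum>c\<in>F. of_nat n * \<psi> (a * e b c))"
  proof (intro sum.cong refl)
    fix a b c assume b: "b \<in> F" and c: "c \<in> F"
    then have b0: "b \<noteq> 0" and c0: "c \<noteq> 0" unfolding F_def by auto
    have "(\<Sum>d\<in>F. (\<Sum>m<n. \<omega> (-lam/(b*c*d)) ^ m) * \<psi> (a*(1+b+c+d)))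
        = (\<Sum>d\<in>F. if d = - lam / (b * c) then of_nat n * \<psi> (a*(1+b+c+d)) else 0)"
    proof (rule sum.cong[OF refl])
      fix d assume "d \<in> F"
      then have d0: "d \<noteq> 0" unfolding F_def by auto
      have z: "-lam/(b*c*d) \<noteq> 0" using lam0 b0 c0 d0 by simp
      have iff: "(-lam/(b*c*d) = 1) \<longleftrightarrow> d = - lam / (b * c)"
        using b0 c0 d0 by (auto simp: field_simps)
      show "(\<Sum>m<n. \<omega> (-lam/(b*c*d)) ^ m) * \<psi> (a*(1+b+c+d))
          = (if d = - lam / (b * c) then of_nat n * \<psi> (a*(1+b+c+d)) else 0)"
        unfolding n_def om_orth[OF gen z] iff by simp
    qed
    also have "\<dots> = of_nat n * \<psi> (a * e b c)"
      using lam0 b0 c0 unfolding F_def e_def by (simp add: sum.delta)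
    finally show "(\<Sum>d\<in>F. (\<Sum>m<n. \<omega> (-lam/(b*c*d)) ^ m) * \<psi> (a*(1+b+c+d))) = of_nat n * \<psi> (a * e b c)" .
  qed
  also have "\<dots> = (\<Sum>b\<in>F. \<Sum>c\<in>F. of_nat n * (\<Sum>a\<in>F. \<psi> (a * e b c)))"
    by (subst swap3, intro sum.cong refl, simp only: sum_distrib_left)
  also have "\<dots> = (\<Sum>b\<in>F. \<Sum>c\<in>F. of_nat n * (of_nat (card (UNIV::'a set)) * (if e b c = 0 then 1 else 0) - 1))"
    unfolding F_def psi_sum_star[OF ntr] by (intro sum.cong refl) auto
  also have "\<dots> = of_nat n * (of_nat (card (UNIV::'a set)) * (\<Sum>b\<in>F. \<Sum>c\<in>F. (if e b c = 0 then 1 else 0)) - of_nat n ^ 2)"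
    by (simp add: sum_distrib_left sum_subtractf Fn power2_eq_square algebra_simps)
  also have "(\<Sum>b\<in>F. \<Sum>c\<in>F. (if e b c = 0 then 1 else 0)) = (of_nat (card {p \<in> F \<times> F. e (fst p) (snd p) = 0}) :: complex)"
    by (subst card_filter_sum) (simp_all add: sum.cartesian_product case_prod_beta)
  finally show ?thesis unfolding F_def n_def e_def .
qed

end

lemma twentyseven_nz:
  assumes "\<not> 3 dvd card (UNIV::'a::{finite,field} set)"
  shows "(27::'a) \<noteq> 0"
proof
  assume h: "(27::'a) = 0"
  have e: "(3::'a) * (3 * 3) = 0" using h by simp
  then have "(3::'a) = 0" by (metis mult_eq_0_iff)
  then have d: "CHAR('a) dvd 3" using of_nat_eq_0_iff_char_dvd[of 3, where 'a='a] by simp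
  then have le: "CHAR('a) \<le> 3" by (rule dvd_imp_le) simp
  have "CHAR('a) \<noteq> 1" using CHAR_not_1'[where 'a='a] by simp
  moreover have "CHAR('a) \<noteq> 0" using d by (metis dvd_0_left_iff zero_neq_numeral)
  moreover have "CHAR('a) \<noteq> 2" using d by (metis even_numeral odd_numeral)
  ultimately have "CHAR('a) = 3" using le by linarith
  then have "3 dvd card (UNIV::'a set)" using CHAR_dvd_CARD[where 'a='a] by simp
  then show False using assms by simp
qed

lemma curve_count:
  fixes lam :: "'a::{finite,field}"
  assumes lam0: "lam \<noteq> 0"
  shows "card {p :: 'a \<times> 'a. snd p ^ 2 + fst p * snd p + snd p = lam * fst p ^ 3}
       = card {p \<in> {x::'a. x \<noteq> 0} \<times> {x. x \<noteq> 0}. 1 + fst p + snd p + - lam / (fst p * snd p) = 0} + 2"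
proof -
  define C where "C = {p :: 'a \<times> 'a. snd p ^ 2 + fst p * snd p + snd p = lam * fst p ^ 3}"
  define Q where "Q = {p \<in> {x::'a. x \<noteq> 0} \<times> {x. x \<noteq> 0}. 1 + fst p + snd p + - lam / (fst p * snd p) = 0}"
  define f where "f p = (1 / snd p, fst p / snd p)" for p :: "'a \<times> 'a"
  have CU: "C = {(0,0),(0,-1)} \<union> f ` Q"
  proof (intro equalityI subsetI)
    fix p assume "p \<in> C"
    then obtain x y where p: "p = (x,y)" and eq: "y^2 + x*y + y = lam * x^3" unfolding C_def by (cases p) auto
    show "p \<in> {(0,0),(0,-1)} \<union> f ` Q"
    proof (cases "x = 0")
      case True
      then have "y * (y + 1) = 0" using eq by (simp add: power2_eq_square algebra_simps)
      then have "y = 0 \<or> y = -1" by (auto simp: add_eq_0_iff2)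
      then show ?thesis using p True by auto
    next
      case False
      have y0: "y \<noteq> 0" using eq False lam0 by auto
      have "lam / (y/x*(1/x)) = lam * x^3 / (x*y)" using False y0 by (simp add: field_simps power3_eq_cube)
      also have "\<dots> = (y^2 + x*y + y)/(x*y)" using eq by simp
      also have "\<dots> = y/x + 1 + 1/x" using False y0 by (simp add: field_simps power2_eq_square)
      finally have "(y/x, 1/x) \<in> Q" unfolding Q_def using False y0 by simp
      note this
      moreover have "f (y/x, 1/x) = p" unfolding f_def p using False by simp
      ultimately show ?thesis by blast
    qed
  next
    fix p assume "p \<in> {(0,0),(0,-1)} \<union> f ` Q"
    then consider "p = (0,0)" | "p = (0,-1)" | "p \<in> f ` Q" by blast
    then show "p \<in> C"
    proof cases
      case 3
      then obtain b c where bc: "(b,c) \<in> Q" "p = f (b,c)" by auto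
      then have b0: "b \<noteq> 0" and c0: "c \<noteq> 0" and e: "1 + b + c + - lam / (b * c) = 0" unfolding Q_def by auto
      have l: "lam = b * c * (1 + b + c)" using e b0 c0 by (simp add: field_simps)
      show ?thesis unfolding C_def bc(2) f_def using b0 c0
        by (simp add: l field_simps power2_eq_square power3_eq_cube)
    qed (auto simp: C_def power2_eq_square)
  qed
  have inj: "inj_on f Q"
  proof (rule inj_onI)
    fix p p' assume "p \<in> Q" "p' \<in> Q" "f p = f p'"
    then show "p = p'" unfolding Q_def f_def by (auto simp: prod_eq_iff field_simps)
  qed
  have disj: "{(0,0),(0,-1)} \<inter> f ` Q = {}" unfolding Q_def f_def by auto
  have "card C = card {(0::'a,0::'a),(0,-1)} + card (f ` Q)"
    unfolding CU by (rule card_Un_disjoint) (simp_all add: disj)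
  also have "card {(0::'a,0::'a),(0,-1)} = 2" by simp
  also have "card (f ` Q) = card Q" by (rule card_image[OF inj])
  finally show ?thesis unfolding C_def Q_def by simp
qed


theorem mainTheorem4:
  fixes lam :: "'a::{finite,field}"
    and \<psi> \<omega> :: "'a \<Rightarrow> complex"
  assumes "\<not> 2 dvd card (UNIV :: 'a set)" and "\<not> 3 dvd card (UNIV :: 'a set)"
    and "lam \<noteq> 0" and "27 * lam \<noteq> 1"
    and "nontrivial_additive_char \<psi>"
    and "char_generator \<omega>"
  shows "of_nat (E_card lam) = of_nat (card (UNIV :: 'a set)) + 1 - H_q \<psi> \<omega> (27 * lam)"
proof -
  note gen = assms(6) and ntr = assms(5) and lam0 = assms(3)
  define q where "q = card (UNIV::'a set)"
  define n where "n = q - 1"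
  define Q where "Q = {p \<in> {x::'a. x \<noteq> 0} \<times> {x. x \<noteq> 0}. 1 + fst p + snd p + - lam / (fst p * snd p) = 0}"
  define X where "X m = gauss_sum \<psi> \<omega> (3 * int m) * gauss_sum \<psi> \<omega> (- int m) ^ 3 * \<omega> (-lam) ^ m" for m :: nat
  have "card {0::'a, 1} \<le> q" unfolding q_def by (rule card_mono) auto
  then have q2: "q \<ge> 2" by simp
  have n0: "n > 0" unfolding n_def using q2 by simp
  have nq: "(of_nat n :: complex) = of_nat q - 1" unfolding n_def using q2 by (simp add: of_nat_diff)
  have t27: "(27::'a) \<noteq> 0" using twentyseven_nz assms(2) by blast
  have om: "\<omega> (- (27 * lam) / 27) = \<omega> (-lam)" using t27 by simp
  have sX: "(\<Sum>m<n. X m) = of_nat n * (of_nat q * of_nat (card Q) - of_nat n ^ 2)"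
    unfolding X_def n_def q_def Q_def by (rule sumX[OF gen ntr lam0])
  have g0: "gauss_sum \<psi> \<omega> 0 = -1"
  proof -
    have "gauss_sum \<psi> \<omega> 0 = (\<Sum>x\<in>{x::'a. x \<noteq> 0}. \<psi> (x * 1))" unfolding gauss_sum_def by simp
    also have "\<dots> = -1" by (subst psi_sum_star[OF ntr]) simp
    finally show ?thesis .
  qed
  have X0: "X 0 = 1" unfolding X_def using g0 by simp
  have H: "H_q \<psi> \<omega> (27 * lam) = 1 / (1 - of_nat q) * (\<Sum>m<n. (if m = 0 then 1 else inverse (of_nat q)) * X m)"
  proof -
    have "(\<Sum>m = 0..int q - 2. (of_nat q) powi (s_fun q m - 1) * gauss_sum \<psi> \<omega> (3 * m) * (gauss_sum \<psi> \<omega> (- m)) ^ 3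
         * (\<omega> (- (27 * lam) / 27)) powi m) =
          (\<Sum>m<n. (of_nat q) powi (s_fun q (int m) - 1) * gauss_sum \<psi> \<omega> (3 * int m) * (gauss_sum \<psi> \<omega> (- int m)) ^ 3
         * (\<omega> (- (27 * lam) / 27)) powi (int m))"
      by (rule sum.reindex_bij_witness[where i=int and j=nat]) (use q2 in \<open>auto simp: n_def\<close>)
    also have "\<dots> = (\<Sum>m<n. (if m = 0 then 1 else inverse (of_nat q)) * X m)"
    proof (rule sum.cong[OF refl])
      fix m assume "m \<in> {..<n}"
      then have "int m < int q - 1" unfolding n_def using q2 by auto
      then have s: "s_fun q (int m) = (if m = 0 then 1 else 0)" unfolding s_fun_def by simp
      show "(of_nat q) powi (s_fun q (int m) - 1) * gauss_sum \<psi> \<omega> (3 * int m) * (gauss_sum \<psi> \<omega> (- int m)) ^ 3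
         * (\<omega> (- (27 * lam) / 27)) powi (int m) = (if m = 0 then 1 else inverse (of_nat q)) * X m"
        unfolding s om X_def by (simp add: power_int_of_nat)
    qed
    finally show ?thesis unfolding H_q_def Let_def q_def by simp
  qed
  have W: "(\<Sum>m<n. (if m = 0 then 1 else inverse (of_nat q)) * X m)
         = X 0 + inverse (of_nat q) * ((\<Sum>m<n. X m) - X 0)"
  proof -
    have "(\<Sum>m<n. (if m = 0 then 1 else inverse (of_nat q)) * X m)
        = (\<Sum>m<n. inverse (of_nat q) * X m + (if m = 0 then (1 - inverse (of_nat q)) * X m else 0))"
      by (rule sum.cong) (auto simp: algebra_simps)
    also have "\<dots> = inverse (of_nat q) * (\<Sum>m<n. X m) + (1 - inverse (of_nat q)) * X 0"
      using n0 by (simp add: sum.distrib sum_distrib_left algebra_simps)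
    finally show ?thesis by (simp add: algebra_simps)
  qed
  have Ec: "E_card lam = card Q + 3"
    unfolding E_card_def curve_count[OF lam0] Q_def by simp
  have qnz: "(of_nat q :: complex) \<noteq> 0" "(1 - of_nat q :: complex) \<noteq> 0" using q2 by auto
  show ?thesis
    unfolding Ec H W sX X0 q_def[symmetric] using qnz
    by (simp add: nq field_simps) (simp add: algebra_simps power2_eq_square power3_eq_cube)
qed

end
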